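(* Let $g$ be an element of $A$ or of $B$ with $g\notin H$. Then there exists an integer $t_0>1$ such that for every positive integer $t$ divisible by $t_0$, $g\rho_t\notin H\rho_t$.
   Context: Fix integers $m,n>1$ and let $G_{mn}=\langle a,b;\ [a^m,b^n]=1\rangle$. Put $c=a^m$, $d=b^n$, $H=\langle c,d\rangle$ (free abelian with basis $c,d$), $A=\langle a,H\rangle$, $B=\langle b,H\rangle$. For an integer $t>1$ let $G_{mn}(t)=\langle a,b;\ [a^m,b^n]=1,\ a^{mt}=b^{nt}=1\rangle$ and let $\rho_t:G_{mn}\to G_{mn}(t)$ be the natural homomorphism. *)

theory Defs
  imports Main
begin

text \<open>Groups given by generators a, b and relators, modelled concretely:
  elements are words in a, b and their inverses; two words represent the same
  element iff they are related by the congruence generated by free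
  cancellation and insertion/deletion of relators.\<close>

datatype gen = GA | GB

type_synonym letter = "gen \<times> bool"   (* (generator, inverted?) *)
type_synonym word = "letter list"

definition inv_letter :: "letter \<Rightarrow> letter" where
  "inv_letter x = (fst x, \<not> snd x)"

definition inv_word :: "word \<Rightarrow> word" where
  "inv_word w = rev (map inv_letter w)"

definition wa :: word where "wa = [(GA, False)]"
definition wb :: word where "wb = [(GB, False)]"

definition wpow :: "word \<Rightarrow> nat \<Rightarrow> word" where
  "wpow w k = concat (replicate k w)"

definition wcomm :: "word \<Rightarrow> word \<Rightarrow> word" where
  "wcomm u v = inv_word u @ inv_word v @ u @ v"

inductive word_eq :: "word set \<Rightarrow> word \<Rightarrow> word \<Rightarrow> bool" for R where
  refl: "word_eq R u u"
| sym: "word_eq R u v \<Longrightarrow> word_eq R v u"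
| trans: "word_eq R u v \<Longrightarrow> word_eq R v w \<Longrightarrow> word_eq R u w"
| cancel: "word_eq R (u @ [x, inv_letter x] @ v) (u @ v)"
| relator: "r \<in> R \<Longrightarrow> word_eq R (u @ r @ v) (u @ v)"

definition in_subgroup :: "word set \<Rightarrow> word set \<Rightarrow> word \<Rightarrow> bool" where
  "in_subgroup R S w \<longleftrightarrow>
     (\<exists>ws. set ws \<subseteq> S \<union> inv_word ` S \<and> word_eq R w (concat ws))"

definition wc :: "nat \<Rightarrow> word" where "wc m = wpow wa m"
definition wd :: "nat \<Rightarrow> word" where "wd n = wpow wb n"

definition rels_G :: "nat \<Rightarrow> nat \<Rightarrow> word set" where
  "rels_G m n = {wcomm (wc m) (wd n)}"

definition rels_Gt :: "nat \<Rightarrow> nat \<Rightarrow> nat \<Rightarrow> word set" where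
  "rels_Gt m n t = {wcomm (wc m) (wd n), wpow wa (m * t), wpow wb (n * t)}"

end

theory Submission
  imports Defs
begin


lemma inv_letter_inv[simp]: "inv_letter (inv_letter x) = x"
  by (simp add: inv_letter_def)
lemma inv_word_Nil[simp]: "inv_word [] = []" by (simp add: inv_word_def)
lemma inv_word_Cons[simp]: "inv_word (x#u) = inv_word u @ [inv_letter x]" by (simp add: inv_word_def)
lemma inv_word_append[simp]: "inv_word (u@v) = inv_word v @ inv_word u" by (simp add: inv_word_def)
lemma inv_word_inv[simp]: "inv_word (inv_word u) = u" by (induct u) auto
lemma wpow_0[simp]: "wpow w 0 = []" by (simp add: wpow_def)
lemma wpow_Suc: "wpow w (Suc k) = w @ wpow w k" by (simp add: wpow_def)
lemma wpow_add: "wpow w (i+j) = wpow w i @ wpow w j" by (simp add: wpow_def replicate_add)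
lemma wpow_mult: "wpow w (i*j) = wpow (wpow w i) j"
  by (induct j) (auto simp: wpow_Suc wpow_add)
lemma wpow_single: "wpow [x] k = replicate k x" by (induct k) (auto simp: wpow_Suc)
lemma wpow_replicate: "wpow (replicate q x) k = replicate (q*k) x"
  by (induct k) (auto simp: wpow_Suc replicate_add[symmetric])
lemma inv_word_replicate: "inv_word (replicate k x) = replicate k (inv_letter x)"
  by (induct k) (auto simp: replicate_append_same)
lemma inv_wpow: "inv_word (wpow w k) = wpow (inv_word w) k"
proof (induct k)
  case (Suc k)
  have "wpow (inv_word w) (Suc k) = wpow (inv_word w) (k + 1)" by simp
  then show ?case using Suc by (simp add: wpow_Suc wpow_add del: One_nat_def) (simp add: wpow_def)
qed simp

lemma weq_cong: "word_eq R u v \<Longrightarrow> word_eq R (x@u@y) (x@v@y)"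
proof (induct rule: word_eq.induct)
  case refl then show ?case by (rule word_eq.refl)
next
  case (sym u v) then show ?case by (metis word_eq.sym)
next
  case (trans u v w) then show ?case by (metis word_eq.trans)
next
  case (cancel u a v) then show ?case using word_eq.cancel[of R "x@u" a "v@y"] by simp
next
  case (relator r u v) then show ?case using word_eq.relator[of r R "x@u" "v@y"] by simp
qed

lemma weq_mono: "word_eq R u v \<Longrightarrow> R \<subseteq> R' \<Longrightarrow> word_eq R' u v"
proof (induct rule: word_eq.induct)
  case (relator r u v) then show ?case using word_eq.relator[of r R' u v] by auto
next
  case (cancel u x v) then show ?case using word_eq.cancel[of R' u x v] by simp
qed (auto intro: word_eq.intros)

lemma weq_trans': "word_eq R u v \<Longrightarrow> word_eq R v w \<Longrightarrow> word_eq R u w" by (rule word_eq.trans)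
lemma weq_sym': "word_eq R u v \<Longrightarrow> word_eq R v u" by (rule word_eq.sym)

lemma weq_inv_right: "word_eq R (u @ inv_word u) []"
proof (induct u)
  case Nil then show ?case by (simp add: word_eq.refl)
next
  case (Cons x u)
  have "word_eq R ([x] @ (u @ inv_word u) @ [inv_letter x]) ([x] @ [] @ [inv_letter x])"
    using weq_cong[OF Cons] .
  moreover have "word_eq R ([] @ [x, inv_letter x] @ []) ([] @ [])" by (rule word_eq.cancel)
  ultimately show ?case by (auto intro: word_eq.trans)
qed

lemma weq_inv_left: "word_eq R (inv_word u @ u) []"
  using weq_inv_right[of R "inv_word u"] by simp

lemma weq_cancel_mid: "word_eq R (x @ u @ inv_word u @ y) (x @ y)"
  using weq_cong[OF weq_inv_right[of R u], of x y] by simp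
lemma weq_cancel_mid': "word_eq R (x @ inv_word u @ u @ y) (x @ y)"
  using weq_cong[OF weq_inv_left[of R u], of x y] by simp

definition commw :: "word set \<Rightarrow> word \<Rightarrow> word \<Rightarrow> bool" where
  "commw R X u \<longleftrightarrow> word_eq R (X@u) (u@X)"

lemma commw_nil: "commw R X []" by (simp add: commw_def word_eq.refl)
lemma commw_app: "commw R X u \<Longrightarrow> commw R X v \<Longrightarrow> commw R X (u@v)"
  unfolding commw_def
  using weq_cong[of R "X@u" "u@X" "[]" v] weq_cong[of R "X@v" "v@X" u "[]"]
  by (auto intro: word_eq.trans)
lemma commw_wpow: "commw R X u \<Longrightarrow> commw R X (wpow u k)"
  by (induct k) (auto simp: wpow_Suc commw_nil commw_app)
lemma commw_concat: "(\<And>u. u \<in> set us \<Longrightarrow> commw R X u) \<Longrightarrow> commw R X (concat us)"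
  by (induct us) (auto simp: commw_nil commw_app)
lemma commw_sym: "commw R X u \<Longrightarrow> commw R u X"
  unfolding commw_def by (rule word_eq.sym)
lemma commw_inv: "commw R X u \<Longrightarrow> commw R X (inv_word u)"
proof -
  assume h: "commw R X u"
  let ?i = "inv_word u"
  have 1: "word_eq R (?i @ X @ u @ ?i) (?i @ X)"
    using weq_cancel_mid[of R "?i @ X" u "[]"] by simp
  have 2: "word_eq R (?i @ (X @ u) @ ?i) (?i @ (u @ X) @ ?i)"
    using weq_cong[OF h[unfolded commw_def]] .
  have 3: "word_eq R (?i @ u @ X @ ?i) (X @ ?i)"
    using weq_cancel_mid'[of R "[]" u "X @ ?i"] by simp
  have "word_eq R (?i @ X) (X @ ?i)"
    using 1 2 3 by simp (meson word_eq.sym word_eq.trans)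
  then show ?thesis unfolding commw_def by (rule word_eq.sym)
qed



primrec vinf :: "nat \<Rightarrow> (bool \<times> int) list \<Rightarrow> bool" where
  "vinf p [] = True"
| "vinf p (x # r) = ((if fst x then 0 < snd x \<and> snd x < int p else snd x \<noteq> 0) \<and>
     (if r = [] then fst x else fst (hd r) \<noteq> fst x) \<and> vinf p r)"

fun syl :: "letter \<Rightarrow> word \<Rightarrow> bool \<times> int \<Rightarrow> word" where
  "syl l D (b,k) = (if b then wpow [l] (nat k) else if k \<ge> 0 then wpow D (nat k)
                    else wpow (inv_word D) (nat (-k)))"

definition xw :: "letter \<Rightarrow> word \<Rightarrow> (bool \<times> int) list \<Rightarrow> word" where
  "xw l D y = concat (map (syl l D) y)"

lemma xw_Nil[simp]: "xw l D [] = []" by (simp add: xw_def)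
lemma xw_Cons[simp]: "xw l D (x#y) = syl l D x @ xw l D y" by (simp add: xw_def)

context
  fixes R :: "word set" and l :: letter and p :: nat and D :: word
  assumes p1: "p > 1"
    and comm: "word_eq R (wpow [l] p @ D) (D @ wpow [l] p)"
begin

abbreviation "CC \<equiv> wpow [l] p"
abbreviation "HH \<equiv> {CC, D} \<union> inv_word ` {CC, D}"

lemma commC_syl: "commw R CC (syl l D x)"
proof -
  have a: "commw R CC [l]" unfolding commw_def wpow_single
    by (metis replicate_Suc replicate_append_same append.left_neutral append_Cons word_eq.refl)
  have d: "commw R CC D" using comm unfolding commw_def .
  obtain b k where x: "x = (b,k)" by (cases x)
  show ?thesis using a d unfolding x
    by (auto simp: commw_wpow commw_inv)
qed

lemma commC_xw: "commw R CC (xw l D y)"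
  unfolding xw_def by (rule commw_concat) (auto simp del: syl.simps intro: commC_syl)

lemma commCi_xw: "commw R (inv_word CC) (xw l D y)"
  by (rule commw_sym, rule commw_inv, rule commw_sym, rule commC_xw)

lemma wt: "word_eq R u v \<Longrightarrow> word_eq R v w \<Longrightarrow> word_eq R u w" by (rule word_eq.trans)

definition goodstep :: "word \<Rightarrow> (bool \<times> int) list \<Rightarrow> bool" where
  "goodstep blk y' \<longleftrightarrow> (\<exists>y hs. vinf p y \<and> set hs \<subseteq> HH \<and>
      word_eq R (blk @ xw l D y') (xw l D y @ concat hs))"

lemma gs_lit: "vinf p y \<Longrightarrow> blk @ xw l D y' = xw l D y \<Longrightarrow> goodstep blk y'"
  unfolding goodstep_def by (rule exI[of _ y], rule exI[of _ "[]"]) (auto intro: word_eq.refl)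

lemma gs_eq: "vinf p y \<Longrightarrow> word_eq R (blk @ xw l D y') (xw l D y) \<Longrightarrow> goodstep blk y'"
  unfolding goodstep_def by (rule exI[of _ y], rule exI[of _ "[]"]) auto

lemma step_C: "goodstep CC y'" if "vinf p y'"
  unfolding goodstep_def
  using that commC_xw[of y'] unfolding commw_def
  by (intro exI[of _ y'] exI[of _ "[CC]"]) auto

lemma step_Ci: "goodstep (inv_word CC) y'" if "vinf p y'"
  unfolding goodstep_def
  using that commCi_xw[of y'] unfolding commw_def
  by (intro exI[of _ y'] exI[of _ "[inv_word CC]"]) auto

lemma wpow_l_Suc: "wpow [l] (nat (k+1)) = [l] @ wpow [l] (nat k)" if "k \<ge> 0"
proof -
  have "nat (k+1) = Suc (nat k)" using that by simp
  then show ?thesis by (simp add: wpow_Suc)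
qed

lemma step_L: "goodstep [l] y'" if v: "vinf p y'"
proof (cases y')
  case Nil
  then show ?thesis using p1 by (intro gs_lit[of "[(True,1)]"]) (auto simp: wpow_single)
next
  case (Cons x r)
  obtain b k where x: "x = (b,k)" by (cases x)
  show ?thesis
  proof (cases b)
    case True
    then have k: "0 < k" "k < int p" using v Cons x by auto
    have vr: "vinf p r" "r \<noteq> [] \<Longrightarrow> \<not> fst (hd r)" using v Cons x True by (auto split: if_splits)
    show ?thesis
    proof (cases "k + 1 < int p")
      case True
      have "vinf p ((True, k+1) # r)" using vr(1) vr(2) k True by (cases r) auto
      moreover have "[l] @ xw l D y' = xw l D ((True, k + 1) # r)"
        using Cons x \<open>b\<close> k wpow_l_Suc[of k] by simp
      ultimately show ?thesis by (intro gs_lit[of "(True,k+1)#r"])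
    next
      case False
      then have kp: "k + 1 = int p" using k by auto
      have e: "[l] @ wpow [l] (nat k) = CC"
        using wpow_l_Suc[of k] k kp by simp
      have ee: "[l] @ xw l D y' = ([l] @ wpow [l] (nat k)) @ xw l D r" using Cons x \<open>b\<close> by simp
      have "word_eq R (CC @ xw l D r) (xw l D r @ concat [CC])"
        using commC_xw[of r] unfolding commw_def by simp
      then have "word_eq R ([l] @ xw l D y') (xw l D r @ concat [CC])"
        unfolding ee e .
      then show ?thesis unfolding goodstep_def using vr
        by (intro exI[of _ r] exI[of _ "[CC]"]) auto
    qed
  next
    case False
    have v2: "vinf p ((True, 1) # y')" using v p1 Cons x False by auto
    have e2: "[l] @ xw l D y' = xw l D ((True,1)#y')" by (simp add: wpow_single)
    show ?thesis by (rule gs_lit[OF v2 e2])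
  qed
qed

lemma step_Li: "goodstep (inv_word [l]) y'" if v: "vinf p y'"
proof -
  have li: "inv_word [l] = [inv_letter l]" by simp
  show ?thesis
  proof (cases "y' \<noteq> [] \<and> fst (hd y')")
    case True
    then obtain k r where y': "y' = (True,k)#r" by (cases y') auto
    then have k: "0 < k" "k < int p" using v by auto
    have vr: "vinf p r" "r \<noteq> [] \<Longrightarrow> \<not> fst (hd r)" using v y' by (auto split: if_splits)
    have e: "inv_word [l] @ xw l D y' = inv_word [l] @ [l] @ wpow [l] (nat (k-1)) @ xw l D r"
      using wpow_l_Suc[of "k-1"] k y' by simp
    have eq: "word_eq R (inv_word [l] @ xw l D y') (wpow [l] (nat (k-1)) @ xw l D r)"
      unfolding e using weq_cancel_mid'[of R "[]" "[l]"] by simp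
    show ?thesis
    proof (cases "k = 1")
      case True
      then show ?thesis using eq vr by (intro gs_eq[of r]) auto
    next
      case False
      have "vinf p ((True,k-1)#r)" using vr k False by auto
      then show ?thesis using eq by (intro gs_eq[of "(True,k-1)#r"]) auto
    qed
  next
    case False
    let ?W = "wpow [l] (p - 1)"
    have Cs: "CC = [l] @ ?W" using p1 by (metis Suc_diff_1 less_trans zero_less_one wpow_Suc)
    have 1: "word_eq R (inv_word [l] @ CC @ inv_word CC @ xw l D y') (inv_word [l] @ xw l D y')"
      using weq_cancel_mid[of R "inv_word [l]" CC "xw l D y'"] .
    have 2: "word_eq R (inv_word [l] @ [l] @ ?W @ inv_word CC @ xw l D y') (?W @ inv_word CC @ xw l D y')"
      using weq_cancel_mid'[of R "[]" "[l]" "?W @ inv_word CC @ xw l D y'"] by simp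
    have 3: "word_eq R (?W @ inv_word CC @ xw l D y') (?W @ xw l D y' @ inv_word CC)"
      using weq_cong[OF commCi_xw[of y', unfolded commw_def], of ?W "[]"] by simp
    have twob: "word_eq R (inv_word [l] @ CC @ inv_word CC @ xw l D y') (?W @ inv_word CC @ xw l D y')"
      using 2 Cs by simp
    have eq: "word_eq R (inv_word [l] @ xw l D y') (?W @ xw l D y' @ inv_word CC)"
      by (rule wt[OF wt[OF word_eq.sym[OF 1] twob] 3])
    have pm: "int (p - 1) = int p - 1" using p1 by simp
    have v2: "vinf p ((True, int p - 1) # y')" using v p1 False by (cases y') auto
    have s: "syl l D (True, int p - 1) = ?W" by (simp add: pm[symmetric])
    show ?thesis unfolding goodstep_def
      using v2 eq s by (intro exI[of _ "(True, int p - 1) # y'"] exI[of _ "[inv_word CC]"]) auto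
  qed
qed

lemma wpow_nat_Suc: "wpow w (nat (k+1)) = w @ wpow w (nat k)" if "k \<ge> 0"
proof -
  have "nat (k+1) = Suc (nat k)" using that by simp
  then show ?thesis by (simp add: wpow_Suc)
qed

lemma wpow_one[simp]: "wpow w (Suc 0) = w" by (simp add: wpow_def)

lemma step_D: "goodstep D y'" if v: "vinf p y'"
proof (cases y')
  case Nil
  then show ?thesis unfolding goodstep_def
    by (intro exI[of _ "[]"] exI[of _ "[D]"]) (auto intro: word_eq.refl)
next
  case (Cons x r)
  obtain b k where x: "x = (b,k)" by (cases x)
  show ?thesis
  proof (cases b)
    case True
    have v2: "vinf p ((False, 1) # y')" using v Cons x True by auto
    have e2: "D @ xw l D y' = xw l D ((False,1)#y')" by (simp add: wpow_one)
    show ?thesis by (rule gs_lit[OF v2 e2])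
  next
    case False
    then have k: "k \<noteq> 0" and rn: "r \<noteq> []" and hr: "fst (hd r)" and vr: "vinf p r"
      using v Cons x by (auto split: if_splits)
    have y': "y' = (False,k)#r" using Cons x False by simp
    show ?thesis
    proof (cases "k > 0")
      case True
      have v2: "vinf p ((False, k+1) # r)" using vr rn hr True by auto
      have e2: "D @ xw l D y' = xw l D ((False,k+1)#r)" using y' True wpow_nat_Suc[of k D] by simp
      show ?thesis by (rule gs_lit[OF v2 e2])
    next
      case False
      then have kn: "k < 0" using k by simp
      have ee: "D @ xw l D y' = D @ inv_word D @ wpow (inv_word D) (nat (-(k+1))) @ xw l D r"
        using y' kn wpow_nat_Suc[of "-(k+1)" "inv_word D"] by simp
      have eq: "word_eq R (D @ xw l D y') (wpow (inv_word D) (nat (-(k+1))) @ xw l D r)"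
        unfolding ee using weq_cancel_mid[of R "[]" D] by simp
      show ?thesis
      proof (cases "k = -1")
        case True
        then show ?thesis using eq vr by (intro gs_eq[of r]) auto
      next
        case False
        have v2: "vinf p ((False,k+1)#r)" using vr rn hr False kn by auto
        have "xw l D ((False,k+1)#r) = wpow (inv_word D) (nat (-(k+1))) @ xw l D r"
          using kn False by simp
        then show ?thesis using eq v2 by (intro gs_eq[of "(False,k+1)#r"]) auto
      qed
    qed
  qed
qed

lemma step_Di: "goodstep (inv_word D) y'" if v: "vinf p y'"
proof (cases y')
  case Nil
  then show ?thesis unfolding goodstep_def
    by (intro exI[of _ "[]"] exI[of _ "[inv_word D]"]) (auto intro: word_eq.refl)
next
  case (Cons x r)
  obtain b k where x: "x = (b,k)" by (cases x)
  show ?thesis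
  proof (cases b)
    case True
    have v2: "vinf p ((False, -1) # y')" using v Cons x True by auto
    have e2: "inv_word D @ xw l D y' = xw l D ((False,-1)#y')" by (simp add: wpow_one)
    show ?thesis by (rule gs_lit[OF v2 e2])
  next
    case False
    then have k: "k \<noteq> 0" and rn: "r \<noteq> []" and hr: "fst (hd r)" and vr: "vinf p r"
      using v Cons x by (auto split: if_splits)
    have y': "y' = (False,k)#r" using Cons x False by simp
    show ?thesis
    proof (cases "k < 0")
      case True
      have v2: "vinf p ((False, k-1) # r)" using vr rn hr True by auto
      have e2: "inv_word D @ xw l D y' = xw l D ((False,k-1)#r)"
        using y' True wpow_nat_Suc[of "-k" "inv_word D"] by simp
      show ?thesis by (rule gs_lit[OF v2 e2])
    next
      case False
      then have kn: "k > 0" using k by simp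
      have ee: "inv_word D @ xw l D y' = inv_word D @ D @ wpow D (nat (k-1)) @ xw l D r"
        using y' kn wpow_nat_Suc[of "k-1" "D"] by simp
      have eq: "word_eq R (inv_word D @ xw l D y') (wpow D (nat (k-1)) @ xw l D r)"
        unfolding ee using weq_cancel_mid'[of R "[]" D] by simp
      show ?thesis
      proof (cases "k = 1")
        case True
        then show ?thesis using eq vr by (intro gs_eq[of r]) auto
      next
        case False
        have v2: "vinf p ((False,k-1)#r)" using vr rn hr False kn by auto
        have "xw l D ((False,k-1)#r) = wpow D (nat (k-1)) @ xw l D r"
          using kn False by simp
        then show ?thesis using eq v2 by (intro gs_eq[of "(False,k-1)#r"]) auto
      qed
    qed
  qed
qed

lemma step_all: "blk \<in> {[l], CC, D} \<union> inv_word ` {[l], CC, D} \<Longrightarrow> vinf p y' \<Longrightarrow> goodstep blk y'"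
  using step_L step_Li step_C step_Ci step_D step_Di by auto

lemma normal_form:
  assumes "set ws \<subseteq> {[l], CC, D} \<union> inv_word ` {[l], CC, D}"
  shows "\<exists>y hs. vinf p y \<and> set hs \<subseteq> HH \<and> word_eq R (concat ws) (xw l D y @ concat hs)"
  using assms
proof (induct ws)
  case Nil
  then show ?case by (intro exI[of _ "[]"] exI[of _ "[]"]) (auto intro: word_eq.refl)
next
  case (Cons blk ws)
  then obtain y' hs' where y': "vinf p y'" "set hs' \<subseteq> HH"
    "word_eq R (concat ws) (xw l D y' @ concat hs')" by auto
  have "goodstep blk y'" using Cons(2) y'(1) by (intro step_all) auto
  then obtain y hs where y: "vinf p y" "set hs \<subseteq> HH"
    "word_eq R (blk @ xw l D y') (xw l D y @ concat hs)" unfolding goodstep_def by auto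
  have 1: "word_eq R (blk @ concat ws) (blk @ xw l D y' @ concat hs')"
    using weq_cong[OF y'(3), of blk "[]"] by simp
  have 2: "word_eq R (blk @ xw l D y' @ concat hs') (xw l D y @ concat hs @ concat hs')"
    using weq_cong[OF y(3), of "[]" "concat hs'"] by simp
  have "word_eq R (concat (blk#ws)) (xw l D y @ concat (hs @ hs'))"
    using wt[OF 1 2] by simp
  then show ?case using y y' by (intro exI[of _ y] exI[of _ "hs @ hs'"]) auto
qed

end



lemma gen3: "(g::gen) \<noteq> h \<Longrightarrow> h \<noteq> k \<Longrightarrow> g = k"
  by (cases g; cases h; cases k) auto

fun lstep :: "(gen \<Rightarrow> nat) \<Rightarrow> gen \<Rightarrow> letter \<Rightarrow> (gen \<times> nat) list \<Rightarrow> (gen \<times> nat) list" where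
  "lstep od X (g, False) [] = (if g = X then [] else [(g,1)])"
| "lstep od X (g, False) ((h,e)#r) =
     (if h = g then (if Suc e = od g then r else (g, Suc e)#r) else (g,1)#(h,e)#r)"
| "lstep od X (g, True) [] = (if g = X then [] else [(g, od g - 1)])"
| "lstep od X (g, True) ((h,e)#r) =
     (if h = g then (if e = 1 then r else (g, e - 1)#r) else (g, od g - 1)#(h,e)#r)"

primrec vld :: "(gen \<Rightarrow> nat) \<Rightarrow> gen \<Rightarrow> (gen \<times> nat) list \<Rightarrow> bool" where
  "vld od X [] = True"
| "vld od X (x#r) = (0 < snd x \<and> snd x < od (fst x) \<and>
      (if r = [] then fst x \<noteq> X else fst (hd r) \<noteq> fst x) \<and> vld od X r)"

primrec act :: "(gen \<Rightarrow> nat) \<Rightarrow> gen \<Rightarrow> word \<Rightarrow> (gen \<times> nat) list \<Rightarrow> (gen \<times> nat) list" where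
  "act od X [] z = z"
| "act od X (x#w) z = lstep od X x (act od X w z)"

lemma act_append: "act od X (u@v) z = act od X u (act od X v z)"
  by (induct u) auto

context
  fixes od :: "gen \<Rightarrow> nat" and X :: gen
  assumes od2: "\<And>g. 1 < od g"
begin

lemma lstep_vld: "vld od X z \<Longrightarrow> vld od X (lstep od X x z)"
proof -
  assume v: "vld od X z"
  obtain g b where x: "x = (g,b)" by (cases x)
  show ?thesis
  proof (cases z)
    case Nil then show ?thesis using x od2[of g] by (cases b) auto
  next
    case (Cons y r)
    obtain h e where y: "y = (h,e)" by (cases y)
    have vr: "vld od X r" and e: "0 < e" "e < od h" and hr: "r \<noteq> [] \<Longrightarrow> fst (hd r) \<noteq> h"
      and rX: "r = [] \<Longrightarrow> h \<noteq> X"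
      using v Cons y by (auto split: if_splits)
    show ?thesis
    proof (cases b)
      case False
      show ?thesis
      proof (cases "h = g")
        case True
        then show ?thesis using False x Cons y vr e hr rX by auto
      next
        case hg: False
        then show ?thesis using False x Cons y vr e hr rX od2[of g] by auto
      qed
    next
      case True
      show ?thesis
      proof (cases "h = g")
        case hg: True
        then show ?thesis using True x Cons y vr e hr rX by auto
      next
        case hg: False
        then show ?thesis using True x Cons y vr e hr rX od2[of g] by auto
      qed
    qed
  qed
qed

lemma act_vld: "vld od X z \<Longrightarrow> vld od X (act od X u z)"
  by (induct u) (auto intro: lstep_vld)

lemma lstep_inv: "vld od X z \<Longrightarrow> lstep od X (inv_letter x) (lstep od X x z) = z"
proof -
  assume v: "vld od X z"
  obtain g b where x: "x = (g,b)" by (cases x)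
  show ?thesis
  proof (cases z)
    case Nil then show ?thesis using x od2[of g] by (cases b) (auto simp: inv_letter_def)
  next
    case (Cons y r)
    obtain h e where y: "y = (h,e)" by (cases y)
    have vr: "vld od X r" and e: "0 < e" "e < od h" and hr: "r \<noteq> [] \<Longrightarrow> fst (hd r) \<noteq> h"
      and rX: "r = [] \<Longrightarrow> h \<noteq> X"
      using v Cons y by (auto split: if_splits)
    have rr: "lstep od X (g, True) r = (g, od g - 1) # r" if "h = g" "Suc e = od g"
    proof (cases r)
      case Nil then show ?thesis using rX that by simp
    next
      case (Cons y2 r2) then show ?thesis using hr that by (cases y2) auto
    qed
    have rr2: "lstep od X (g, False) r = (g, 1) # r" if "h = g" "e = 1"
    proof (cases r)
      case Nil then show ?thesis using rX that by simp
    next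
      case (Cons y2 r2) then show ?thesis using hr that by (cases y2) auto
    qed
    show ?thesis
    proof (cases b)
      case False
      show ?thesis
      proof (cases "h = g")
        case True
        then show ?thesis using False x Cons y e rr by (auto simp: inv_letter_def)
      next
        case hg: False
        then show ?thesis using False x Cons y od2[of g] by (auto simp: inv_letter_def)
      qed
    next
      case True
      show ?thesis
      proof (cases "h = g")
        case hg: True
        then show ?thesis using True x Cons y e rr2 od2[of g] by (auto simp: inv_letter_def)
      next
        case hg: False
        then show ?thesis using True x Cons y od2[of g] by (auto simp: inv_letter_def)
      qed
    qed
  qed
qed

lemma act_inv: "vld od X z \<Longrightarrow> act od X (inv_word u) (act od X u z) = z"
proof (induct u arbitrary: z)
  case (Cons x u)
  have "act od X (inv_word (x#u)) (act od X (x#u) z)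
      = act od X (inv_word u) (lstep od X (inv_letter x) (lstep od X x (act od X u z)))"
    by (simp add: act_append)
  also have "... = act od X (inv_word u) (act od X u z)"
    using lstep_inv act_vld Cons by simp
  also have "... = z" using Cons by simp
  finally show ?case .
qed simp

lemma act_inv2: "vld od X z \<Longrightarrow> act od X u (act od X (inv_word u) z) = z"
  using act_inv[of z "inv_word u"] by simp

definition fixv :: "word \<Rightarrow> bool" where
  "fixv u \<longleftrightarrow> (\<forall>z. vld od X z \<longrightarrow> act od X u z = z)"

lemma word_eq_act:
  assumes "word_eq R u v" "\<And>r. r \<in> R \<Longrightarrow> fixv r" "vld od X z"
  shows "act od X u z = act od X v z"
  using assms
proof (induct rule: word_eq.induct)
  case (cancel u x v)
  have "lstep od X x (lstep od X (inv_letter x) (act od X v z)) = act od X v z"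
    using lstep_inv[of "act od X v z" "inv_letter x"] act_vld cancel by simp
  then show ?case by (simp add: act_append)
next
  case (relator r u v)
  then show ?case using act_vld unfolding fixv_def by (simp add: act_append)
qed auto

lemma fixv_inv: "fixv u \<Longrightarrow> fixv (inv_word u)"
proof -
  assume h: "fixv u"
  have "act od X (inv_word u) z = z" if z: "vld od X z" for z
  proof -
    have "act od X u (act od X (inv_word u) z) = act od X (inv_word u) z"
      using h act_vld[OF z] unfolding fixv_def by blast
    then show ?thesis using act_inv2[OF z] by simp
  qed
  then show ?thesis unfolding fixv_def by blast
qed

lemma fixv_app: "fixv u \<Longrightarrow> fixv v \<Longrightarrow> fixv (u@v)"
  unfolding fixv_def by (simp add: act_append act_vld)

lemma fixv_nil: "fixv []" unfolding fixv_def by simp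

lemma fixv_wpow: "fixv u \<Longrightarrow> fixv (wpow u k)"
  by (induct k) (simp_all add: wpow_Suc fixv_app fixv_nil)

lemma fixv_wcomm: "fixv u \<or> fixv v \<Longrightarrow> fixv (wcomm u v)"
proof -
  assume h: "fixv u \<or> fixv v"
  have "act od X (wcomm u v) z = z" if z: "vld od X z" for z
  proof (cases "fixv u")
    case True
    then have fi: "fixv (inv_word u)" by (rule fixv_inv)
    have "act od X (wcomm u v) z = act od X (inv_word u) (act od X (inv_word v) (act od X u (act od X v z)))"
      unfolding wcomm_def by (simp add: act_append)
    also have "act od X u (act od X v z) = act od X v z" using True z act_vld unfolding fixv_def by blast
    also have "act od X (inv_word v) (act od X v z) = z" using act_inv z by blast
    also have "act od X (inv_word u) z = z" using fi z unfolding fixv_def by blast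
    finally show ?thesis .
  next
    case False
    then have fv: "fixv v" "fixv (inv_word v)" using h fixv_inv by auto
    have "act od X (wcomm u v) z = act od X (inv_word u) (act od X (inv_word v) (act od X u (act od X v z)))"
      unfolding wcomm_def by (simp add: act_append)
    also have "act od X v z = z" using fv z unfolding fixv_def by blast
    also have "act od X (inv_word v) (act od X u z) = act od X u z"
      using fv z act_vld unfolding fixv_def by blast
    also have "act od X (inv_word u) (act od X u z) = z" using act_inv z by blast
    finally show ?thesis .
  qed
  then show ?thesis unfolding fixv_def by blast
qed

end



context
  fixes od :: "gen \<Rightarrow> nat" and X :: gen
  assumes od2: "\<And>g. 1 < od g"
begin

lemma rep_F: "vld od X z \<Longrightarrow> (z = [] \<or> fst (hd z) \<noteq> g) \<Longrightarrow> (z \<noteq> [] \<or> g \<noteq> X) \<Longrightarrow> 0 < j \<Longrightarrow> j < od g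
  \<Longrightarrow> act od X (replicate j (g,False)) z = (g,j)#z"
proof (induct j)
  case (Suc j)
  show ?case
  proof (cases "j = 0")
    case True
    then show ?thesis using Suc.prems by (cases z) auto
  next
    case False
    then have "act od X (replicate j (g,False)) z = (g,j)#z" using Suc by auto
    then show ?thesis using Suc.prems by simp
  qed
qed simp

lemma rep_T: "vld od X z \<Longrightarrow> (z = [] \<or> fst (hd z) \<noteq> g) \<Longrightarrow> (z \<noteq> [] \<or> g \<noteq> X) \<Longrightarrow> 0 < j \<Longrightarrow> j < od g
  \<Longrightarrow> act od X (replicate j (g,True)) z = (g, od g - j)#z"
proof (induct j)
  case (Suc j)
  show ?case
  proof (cases "j = 0")
    case True
    then show ?thesis using Suc.prems by (cases z) auto
  next
    case False
    then have "act od X (replicate j (g,True)) z = (g,od g - j)#z" using Suc by auto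
    moreover have "od g - j \<noteq> 1" using Suc.prems by simp
    ultimately show ?thesis using Suc.prems by (simp add: diff_Suc split: nat.split)
  qed
qed simp

lemma rep_X: "act od X (replicate j (X,b)) [] = []"
  by (induct j) (cases b; simp)+

lemma rep_order0: "vld od X z \<Longrightarrow> (z = [] \<or> fst (hd z) \<noteq> g) \<Longrightarrow> act od X (replicate (od g) (g,False)) z = z"
proof (cases "z = [] \<and> g = X")
  case True then show ?thesis using rep_X by simp
next
  case False
  assume v: "vld od X z" and h: "z = [] \<or> fst (hd z) \<noteq> g"
  have o: "od g = Suc (od g - 1)" using od2[of g] by simp
  have "act od X (replicate (od g - 1) (g,False)) z = (g, od g - 1)#z"
    using rep_F[OF v h] False od2[of g] by auto
  then have "act od X (replicate (od g) (g,False)) z = lstep od X (g,False) ((g, od g - 1)#z)"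
    by (subst o) simp
  also have "... = z" using o by simp
  finally show ?thesis .
qed

lemma rep_order: "vld od X z \<Longrightarrow> act od X (replicate (od g) (g,False)) z = z"
proof (cases "z \<noteq> [] \<and> fst (hd z) = g")
  case False
  assume v: "vld od X z"
  then show ?thesis using rep_order0 False by blast
next
  case True
  assume v: "vld od X z"
  then obtain e r where z: "z = (g,e)#r" using True by (cases z) auto
  have vr: "vld od X r" and e: "0 < e" "e < od g" and hr: "r = [] \<or> fst (hd r) \<noteq> g"
    and rX: "r \<noteq> [] \<or> g \<noteq> X"
    using v z by (auto split: if_splits)
  have ze: "z = act od X (replicate e (g,False)) r" using rep_F[OF vr hr rX e] z by simp
  have "act od X (replicate (od g) (g,False)) z = act od X (replicate e (g,False)) (act od X (replicate (od g) (g,False)) r)"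
    unfolding ze act_append[symmetric] replicate_add[symmetric] by (simp add: add.commute)
  also have "... = z" using rep_order0[OF vr hr] ze by simp
  finally show ?thesis .
qed

lemma act_concat_nil: "(\<And>u. u \<in> set us \<Longrightarrow> act od X u [] = []) \<Longrightarrow> act od X (concat us) [] = []"
  by (induct us) (auto simp: act_append)

end

fun trl :: "gen \<Rightarrow> gen \<Rightarrow> nat \<Rightarrow> nat \<Rightarrow> bool \<times> int \<Rightarrow> gen \<times> nat" where
  "trl lg og q t (b,k) = (if b then (lg, nat k) else (og, nat ((int q * k) mod (int q * int t))))"

lemma mod_neg_case: "0 < (M::int) \<Longrightarrow> -M < x \<Longrightarrow> x < 0 \<Longrightarrow> x mod M = x + M"
proof -
  assume a: "0 < M" "-M < x" "x < 0"
  have "x mod M = (x + M) mod M" by simp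
  also have "... = x + M" using a by (intro mod_pos_pos_trivial) auto
  finally show ?thesis .
qed

context
  fixes od :: "gen \<Rightarrow> nat" and lg og :: gen and p q t :: nat
  assumes od2: "\<And>g. 1 < od g" and lo: "lg \<noteq> og" and odl: "od lg = p" and odo: "od og = q * t"
    and q0: "0 < q" and t0: "0 < t"
begin

lemma xw_act: "vinf p y \<Longrightarrow> (\<forall>x\<in>set y. \<not> fst x \<longrightarrow> \<bar>snd x\<bar> < int t) \<Longrightarrow>
  act od og (xw (lg,False) (replicate q (og,False)) y) [] = map (trl lg og q t) y"
proof (induct y)
  case Nil then show ?case by simp
next
  case (Cons x r)
  obtain b k where x: "x = (b,k)" by (cases x)
  have vr: "vinf p r" and rh: "r \<noteq> [] \<Longrightarrow> fst (hd r) \<noteq> b" and rb: "r = [] \<Longrightarrow> b"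
    and kk: "if b then 0 < k \<and> k < int p else k \<noteq> 0"
    using Cons.prems x by (auto split: if_splits)
  have IH: "act od og (xw (lg,False) (replicate q (og,False)) r) [] = map (trl lg og q t) r"
    using Cons vr by auto
  let ?z = "map (trl lg og q t) r"
  have "vld od og (act od og (xw (lg,False) (replicate q (og,False)) r) [])"
    by (rule act_vld[OF od2]) simp
  then have vz: "vld od og ?z" using IH by simp
  have hz: "r \<noteq> [] \<Longrightarrow> fst (hd ?z) = (if fst (hd r) then lg else og)"
    by (cases r) (auto split: prod.split)
  have A: "act od og (xw (lg,False) (replicate q (og,False)) ((b,k)#r)) []
     = act od og (syl (lg,False) (replicate q (og,False)) (b,k)) ?z"
    using IH by (simp add: act_append del: syl.simps)
  show ?case
  proof (cases b)
    case True
    have "act od og (replicate (nat k) (lg,False)) ?z = (lg, nat k) # ?z"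
      using kk True odl rh hz lo by (intro rep_F[OF od2 vz]) auto
    then show ?thesis using A True x by (simp add: wpow_single)
  next
    case False
    have rn: "r \<noteq> []" using rb False by auto
    have hd1: "fst (hd ?z) = lg" using hz rn rh False by auto
    have kt: "\<bar>k\<bar> < int t" using Cons.prems x False by auto
    show ?thesis
    proof (cases "k > 0")
      case True
      have j: "0 < q * nat k" "q * nat k < od og" using q0 True kt odo by auto
      have "act od og (replicate (q * nat k) (og,False)) ?z = (og, q * nat k) # ?z"
        using j rn hd1 lo by (intro rep_F[OF od2 vz]) auto
      moreover have "nat ((int q * k) mod (int q * int t)) = q * nat k"
      proof -
        have "(int q * k) mod (int q * int t) = int q * k"
          using True kt q0 by (intro mod_pos_pos_trivial) auto
        then show ?thesis using True by (simp only:) (simp add: nat_mult_distrib)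
      qed
      ultimately show ?thesis using A True False x by (simp add: wpow_replicate)
    next
      case kn: False
      then have kn: "k < 0" using kk False by auto
      have j: "0 < q * nat (-k)" "q * nat (-k) < od og" using q0 kn kt odo by auto
      have "act od og (replicate (q * nat (-k)) (og,True)) ?z = (og, od og - q * nat (-k)) # ?z"
        using j rn hd1 lo by (intro rep_T[OF od2 vz]) auto
      moreover have "nat ((int q * k) mod (int q * int t)) = od og - q * nat (-k)"
      proof -
        have "(int q * k) mod (int q * int t) = int q * k + int q * int t"
        proof (rule mod_neg_case)
          have a: "int q * (-k) < int q * int t" using kn kt q0 by (intro mult_strict_left_mono) auto
          then show "- (int q * int t) < int q * k" by simp
          show "int q * k < 0" using kn q0 by (simp add: mult_pos_neg)
          show "0 < int q * int t" using q0 t0 by simp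
        qed
        moreover have "int (od og - q * nat (-k)) = int q * k + int q * int t"
          using j odo kn by (simp add: of_nat_diff)
        ultimately show ?thesis by simp
      qed
      ultimately show ?thesis using A kn False x
        by (simp add: wpow_replicate inv_word_replicate inv_letter_def)
    qed
  qed
qed

end



lemma comm_from_rel:
  assumes "wcomm u v \<in> R" shows "word_eq R (u@v) (v@u)"
proof -
  have r: "word_eq R ((v@u) @ wcomm u v @ []) ((v@u) @ [])" by (rule word_eq.relator[OF assms])
  have 1: "word_eq R (v @ u @ inv_word u @ inv_word v @ u @ v) (v @ inv_word v @ u @ v)"
    using weq_cancel_mid[of R v u "inv_word v @ u @ v"] by simp
  have 2: "word_eq R (v @ inv_word v @ u @ v) (u @ v)"
    using weq_cancel_mid[of R "[]" v "u @ v"] by simp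
  have r': "word_eq R (v @ u @ inv_word u @ inv_word v @ u @ v) (v @ u)" using r unfolding wcomm_def by simp
  have "word_eq R (v@u) (u@v)"
    by (rule word_eq.trans[OF word_eq.sym[OF r'] word_eq.trans[OF 1 2]])
  then show ?thesis by (rule word_eq.sym)
qed

lemma generic:
  fixes R :: "word set" and lg og :: gen and p q :: nat and g :: word
  defines "l \<equiv> (lg, False)" and "D \<equiv> replicate q (og, False)"
  assumes p1: "1 < p" and comm: "word_eq R (wpow [l] p @ D) (D @ wpow [l] p)"
    and inS: "in_subgroup R {[l], wpow [l] p, D} g"
    and notH: "\<not> in_subgroup R {wpow [l] p, D} g"
  shows "\<exists>t0::nat. t0 > 1 \<and> (\<forall>t. t > 0 \<and> t0 dvd t \<longrightarrow>
     (\<forall>od Rt. (\<forall>g. 1 < od g) \<longrightarrow> lg \<noteq> og \<longrightarrow> od lg = p \<longrightarrow> od og = q * t \<longrightarrow> 0 < q \<longrightarrow>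
        R \<subseteq> Rt \<longrightarrow> (\<forall>r\<in>Rt. fixv od og r) \<longrightarrow> \<not> in_subgroup Rt {wpow [l] p, D} g))"
proof -
  obtain ws where ws: "set ws \<subseteq> {[l], wpow [l] p, D} \<union> inv_word ` {[l], wpow [l] p, D}"
    "word_eq R g (concat ws)" using inS unfolding in_subgroup_def by auto
  obtain y hs where y: "vinf p y" "set hs \<subseteq> {wpow [l] p, D} \<union> inv_word ` {wpow [l] p, D}"
    "word_eq R (concat ws) (xw l D y @ concat hs)"
    using normal_form[OF p1 comm ws(1)] by blast
  have gy: "word_eq R g (xw l D y @ concat hs)" using ws(2) y(3) by (rule word_eq.trans)
  have yne: "y \<noteq> []"
  proof
    assume "y = []"
    then have "in_subgroup R {wpow [l] p, D} g" using gy y(2) unfolding in_subgroup_def by auto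
    then show False using notH by simp
  qed
  define t0 where "t0 = 2 + sum_list (map (\<lambda>x. nat \<bar>snd x\<bar>) y)"
  have "t0 > 1" unfolding t0_def by simp
  moreover have "\<forall>t. t > 0 \<and> t0 dvd t \<longrightarrow>
     (\<forall>od Rt. (\<forall>g. 1 < od g) \<longrightarrow> lg \<noteq> og \<longrightarrow> od lg = p \<longrightarrow> od og = q * t \<longrightarrow> 0 < q \<longrightarrow>
        R \<subseteq> Rt \<longrightarrow> (\<forall>r\<in>Rt. fixv od og r) \<longrightarrow> \<not> in_subgroup Rt {wpow [l] p, D} g)"
  proof (intro allI impI notI)
    fix t od Rt
    assume t: "t > 0 \<and> t0 dvd t" and od2: "\<forall>g. 1 < od g" and lo: "lg \<noteq> og" and odl: "od lg = p"
      and odo: "od og = q * t" and q0: "0 < q" and RR: "R \<subseteq> Rt" and fx: "\<forall>r\<in>Rt. fixv od og r"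
      and inH: "in_subgroup Rt {wpow [l] p, D} g"
    have od2': "\<And>g. 1 < od g" using od2 by blast
    have tt: "t0 \<le> t" using t by (auto intro: dvd_imp_le)
    have bnd: "\<forall>x\<in>set y. \<not> fst x \<longrightarrow> \<bar>snd x\<bar> < int t"
    proof (intro ballI impI)
      fix x assume "x \<in> set y"
      then have "nat \<bar>snd x\<bar> \<le> sum_list (map (\<lambda>x. nat \<bar>snd x\<bar>) y)"
        by (intro member_le_sum_list) auto
      then show "\<bar>snd x\<bar> < int t" using tt unfolding t0_def by linarith
    qed
    obtain vs where vs: "set vs \<subseteq> {wpow [l] p, D} \<union> inv_word ` {wpow [l] p, D}"
      "word_eq Rt g (concat vs)" using inH unfolding in_subgroup_def by auto
    have e: "word_eq Rt (concat vs) (xw l D y @ concat hs)"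
      using word_eq.trans[OF word_eq.sym[OF vs(2)] weq_mono[OF gy RR]] .
    have fxr: "\<And>r. r \<in> Rt \<Longrightarrow> fixv od og r" using fx by blast
    have hb: "act od og u [] = []" if u: "u \<in> {wpow [l] p, D} \<union> inv_word ` {wpow [l] p, D}" for u
    proof -
      have C: "act od og (wpow [l] p) z = z" if "vld od og z" for z
        using rep_order[OF od2' that, of lg] odl unfolding l_def by (simp add: wpow_single)
      have Dn: "act od og D [] = []" unfolding D_def by (rule rep_X[where od=od and X=og, OF od2'])
      have Cn: "act od og (wpow [l] p) [] = []" using C by simp
      have Ci: "act od og (inv_word (wpow [l] p)) [] = []"
        using act_inv[where od=od and X=og and z="[]" and u="wpow [l] p", OF od2'] Cn by simp
      have Di: "act od og (inv_word D) [] = []"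
        using act_inv[where od=od and X=og and z="[]" and u=D, OF od2'] Dn by simp
      have "u = wpow [l] p \<or> u = D \<or> u = inv_word (wpow [l] p) \<or> u = inv_word D" using u by blast
      then show ?thesis by (elim disjE) (simp_all only: Dn Cn Ci Di)
    qed
    have v0: "vld od og []" by simp
    have L: "act od og (concat vs) [] = []"
      by (rule act_concat_nil[where od=od and X=og, OF od2']) (use hb vs(1) in blast)
    have H: "act od og (concat hs) [] = []"
      by (rule act_concat_nil[where od=od and X=og, OF od2']) (use hb y(2) in blast)
    have "act od og (concat vs) [] = act od og (xw l D y @ concat hs) []"
      by (rule word_eq_act[OF od2' e fxr v0])
    also have "... = act od og (xw l D y) []" using H by (simp add: act_append)
    also have "... = map (trl lg og q t) y"
      unfolding l_def D_def
      by (rule xw_act[OF od2' lo odl odo q0 _ y(1) bnd]) (use t in simp)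
    finally show False using L yne by simp
  qed
  ultimately show ?thesis by blast
qed



lemma wa_eq: "wa = [(GA,False)]" by (simp add: wa_def)
lemma wb_eq: "wb = [(GB,False)]" by (simp add: wb_def)
lemma wc_eq: "wc m = replicate m (GA,False)" by (simp add: wc_def wa_def wpow_single)
lemma wd_eq: "wd n = replicate n (GB,False)" by (simp add: wd_def wb_def wpow_single)

lemma fixv_rep: assumes "\<And>g. 1 < od g" shows "fixv od X (replicate (od g) (g,False))"
  using rep_order[where od=od and X=X and g=g, OF assms] by (simp add: fixv_def[OF assms])

theorem proposition2p4:
  fixes m n :: nat and g :: word
  assumes "m > 1" and "n > 1"
    and "in_subgroup (rels_G m n) {wa, wc m, wd n} g
         \<or> in_subgroup (rels_G m n) {wb, wc m, wd n} g"
    and "\<not> in_subgroup (rels_G m n) {wc m, wd n} g"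
  shows "\<exists>t0::nat. t0 > 1 \<and>
           (\<forall>t::nat. t > 0 \<and> t0 dvd t \<longrightarrow>
              \<not> in_subgroup (rels_Gt m n t) {wc m, wd n} g)"
proof -
  have RR: "rels_G m n \<subseteq> rels_Gt m n t" for t unfolding rels_G_def rels_Gt_def by auto
  have cm: "word_eq (rels_G m n) (wc m @ wd n) (wd n @ wc m)"
    by (rule comm_from_rel) (simp add: rels_G_def)
  from assms(3) show ?thesis
  proof
    assume inS: "in_subgroup (rels_G m n) {wa, wc m, wd n} g"
    have S: "{wa, wc m, wd n} = {[(GA,False)], wpow [(GA,False)] m, replicate n (GB,False)}"
      by (simp add: wa_eq wc_eq wd_eq wpow_single)
    have H: "{wc m, wd n} = {wpow [(GA,False)] m, replicate n (GB,False)}"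
      by (simp add: wc_eq wd_eq wpow_single)
    have cm': "word_eq (rels_G m n) (wpow [(GA,False)] m @ replicate n (GB,False))
                  (replicate n (GB,False) @ wpow [(GA,False)] m)"
      using cm by (simp add: wc_eq wd_eq wpow_single)
    obtain t0 where t0: "t0 > 1" and T: "\<forall>t. t > 0 \<and> t0 dvd t \<longrightarrow>
     (\<forall>od Rt. (\<forall>g. 1 < od g) \<longrightarrow> GA \<noteq> GB \<longrightarrow> od GA = m \<longrightarrow> od GB = n * t \<longrightarrow> 0 < n \<longrightarrow>
        rels_G m n \<subseteq> Rt \<longrightarrow> (\<forall>r\<in>Rt. fixv od GB r) \<longrightarrow>
        \<not> in_subgroup Rt {wpow [(GA,False)] m, replicate n (GB,False)} g)"
      using generic[of m "rels_G m n" GA n GB g] assms(1) cm' inS assms(4) S H by auto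
    show ?thesis
    proof (intro exI[of _ t0] conjI allI impI)
      show "1 < t0" by (rule t0)
      fix t assume t: "0 < t \<and> t0 dvd t"
      define od where "od = (\<lambda>x. if x = GA then m else n * t)"
      have t1: "1 \<le> t" using t by simp
      have a1: "n * 1 \<le> n * t" using t1 by (rule mult_le_mono2)
      have a2: "m * 1 \<le> m * t" using t1 by (rule mult_le_mono2)
      have "1 < n * t" using a1 assms(2) by linarith
      moreover have "1 < m * t" using a2 assms(1) by linarith
      ultimately have od2: "\<And>x. 1 < od x" unfolding od_def using assms(1,2) by auto
      have fc: "fixv od GB (wc m)" using fixv_rep[where od=od and X=GB and g=GA, OF od2] by (simp add: wc_eq od_def )
      have fr: "\<forall>r\<in>rels_Gt m n t. fixv od GB r"
      proof -
        have 1: "fixv od GB (wcomm (wc m) (wd n))" using fixv_wcomm[where od=od, OF od2] fc by blast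
        have "fixv od GB (wpow (wc m) t)" using fixv_wpow[where od=od, OF od2 fc] .
        then have 2: "fixv od GB (wpow wa (m * t))" by (simp add: wpow_mult wc_def)
        have "fixv od GB (replicate (od GB) (GB,False))" by (rule fixv_rep[where od=od, OF od2])
        then have 3: "fixv od GB (wpow wb (n * t))" by (simp add: od_def wb_eq wpow_single)
        show ?thesis using 1 2 3 unfolding rels_Gt_def by auto
      qed
      have "\<not> in_subgroup (rels_Gt m n t) {wpow [(GA,False)] m, replicate n (GB,False)} g"
      proof -
        have X: "(\<forall>g. 1 < od g) \<longrightarrow> GA \<noteq> GB \<longrightarrow> od GA = m \<longrightarrow> od GB = n * t \<longrightarrow> 0 < n \<longrightarrow>
          rels_G m n \<subseteq> rels_Gt m n t \<longrightarrow> (\<forall>r\<in>rels_Gt m n t. fixv od GB r) \<longrightarrow>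
          \<not> in_subgroup (rels_Gt m n t) {wpow [(GA,False)] m, replicate n (GB,False)} g"
          using T t by blast
        have o: "od GA = m" "od GB = n * t" by (simp_all add: od_def)
        have "\<forall>g. 1 < od g" using od2 by blast
        then show ?thesis using X o fr RR[of t] assms(2) by simp
      qed
      then show "\<not> in_subgroup (rels_Gt m n t) {wc m, wd n} g" using H by simp
    qed
  next
    assume inS: "in_subgroup (rels_G m n) {wb, wc m, wd n} g"
    have S: "{wb, wc m, wd n} = {[(GB,False)], wpow [(GB,False)] n, replicate m (GA,False)}"
      by (auto simp: wb_eq wc_eq wd_eq wpow_single)
    have H: "{wc m, wd n} = {wpow [(GB,False)] n, replicate m (GA,False)}"
      by (auto simp: wc_eq wd_eq wpow_single)
    have cm': "word_eq (rels_G m n) (wpow [(GB,False)] n @ replicate m (GA,False))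
                  (replicate m (GA,False) @ wpow [(GB,False)] n)"
      using word_eq.sym[OF cm] by (simp add: wc_eq wd_eq wpow_single)
    obtain t0 where t0: "t0 > 1" and T: "\<forall>t. t > 0 \<and> t0 dvd t \<longrightarrow>
     (\<forall>od Rt. (\<forall>g. 1 < od g) \<longrightarrow> GB \<noteq> GA \<longrightarrow> od GB = n \<longrightarrow> od GA = m * t \<longrightarrow> 0 < m \<longrightarrow>
        rels_G m n \<subseteq> Rt \<longrightarrow> (\<forall>r\<in>Rt. fixv od GA r) \<longrightarrow>
        \<not> in_subgroup Rt {wpow [(GB,False)] n, replicate m (GA,False)} g)"
      using generic[of n "rels_G m n" GB m GA g] assms(2) cm' inS assms(4) S H by auto
    show ?thesis
    proof (intro exI[of _ t0] conjI allI impI)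
      show "1 < t0" by (rule t0)
      fix t assume t: "0 < t \<and> t0 dvd t"
      define od where "od = (\<lambda>x. if x = GA then m * t else n)"
      have t1: "1 \<le> t" using t by simp
      have a1: "n * 1 \<le> n * t" using t1 by (rule mult_le_mono2)
      have a2: "m * 1 \<le> m * t" using t1 by (rule mult_le_mono2)
      have "1 < n * t" using a1 assms(2) by linarith
      moreover have "1 < m * t" using a2 assms(1) by linarith
      ultimately have od2: "\<And>x. 1 < od x" unfolding od_def using assms(1,2) by auto
      have fd: "fixv od GA (wd n)" using fixv_rep[where od=od and X=GA and g=GB, OF od2] by (simp add: wd_eq od_def)
      have fr: "\<forall>r\<in>rels_Gt m n t. fixv od GA r"
      proof -
        have 1: "fixv od GA (wcomm (wc m) (wd n))" using fixv_wcomm[where od=od, OF od2] fd by blast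
        have "fixv od GA (wpow (wd n) t)" using fixv_wpow[where od=od, OF od2 fd] .
        then have 3: "fixv od GA (wpow wb (n * t))" by (simp add: wpow_mult wd_def)
        have "fixv od GA (replicate (od GA) (GA,False))" by (rule fixv_rep[where od=od, OF od2])
        then have 2: "fixv od GA (wpow wa (m * t))" by (simp add: od_def wa_eq wpow_single)
        show ?thesis using 1 2 3 unfolding rels_Gt_def by auto
      qed
      have "\<not> in_subgroup (rels_Gt m n t) {wpow [(GB,False)] n, replicate m (GA,False)} g"
      proof -
        have X: "(\<forall>g. 1 < od g) \<longrightarrow> GB \<noteq> GA \<longrightarrow> od GB = n \<longrightarrow> od GA = m * t \<longrightarrow> 0 < m \<longrightarrow>
          rels_G m n \<subseteq> rels_Gt m n t \<longrightarrow> (\<forall>r\<in>rels_Gt m n t. fixv od GA r) \<longrightarrow>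
          \<not> in_subgroup (rels_Gt m n t) {wpow [(GB,False)] n, replicate m (GA,False)} g"
          using T t by blast
        have o: "od GB = n" "od GA = m * t" by (simp_all add: od_def)
        have "\<forall>g. 1 < od g" using od2 by blast
        then show ?thesis using X o fr RR[of t] assms(1) by simp
      qed
      then show "\<not> in_subgroup (rels_Gt m n t) {wc m, wd n} g" using H by simp
    qed
  qed
qed

end
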